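(* (1) For every subset $R\subseteq B$: if $R$ is top terminating relative to $T$, then $R$ is terminating relative to $T$. (2) For every subset $Q\subseteq D_T$: if $\overline{Q}$ is top terminating relative to $\overline{T}$, then $\overline{Q}$ is terminating relative to $\overline{T}$.
   Context: For an SRS $R$ over $\Sigma$, $\to_R=\{(u\ell v,urv): u,v\in\Sigma^*, \ell\to r\in R\}$ and the top rewrite relation is $\to_{R_{\mathrm{top}}}=\{(\ell v,rv): v\in\Sigma^*,\ell\to r\in R\}$. For relations $\to_1,\to_2$, "$\to_1$ is terminating relative to $\to_2$" means there is no infinite sequence $s_0,s_1,\dots$ with $s_i\to_1 s_{i+1}$ for infinitely many $i$ and $s_i\to_2 s_{i+1}$ for all other $i$. "$R$ terminating relative to $S$" refers to $\to_R$ vs $\to_S$; "$R$ top terminating relative to $S$" refers to $\to_{R_{\mathrm{top}}}$ vs $\to_S$. The reversal of a string $s_1\cdots s_n$ is $s_n\cdots s_1$ and $\overline{R}=\{\overline{\ell}\to\overline{r}:\ell\to r\in R\}$. Alphabet $\{0_2,1_2,0_3,1_3,2_3,\lhd,\rhd\}$; $D_T=\{0_2\rhd\to\rhd,\ 1_2\rhd\to 2_3\rhd\}$; $A=\{0_20_3\to0_30_2,\ 0_21_3\to0_31_2,\ 0_22_3\to1_30_2,\ 1_20_3\to1_31_2,\ 1_21_3\to2_30_2,\ 1_22_3\to2_31_2\}$; $B=\{\lhd0_3\to\lhd1_2,\ \lhd1_3\to\lhd0_20_2,\ \lhd2_3\to\lhd0_21_2\}$; $T=D_T\cup A\cup B$.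 *)

theory Defs
  imports Main
begin

datatype sym = Zero2 | One2 | Zero3 | One3 | Two3 | Lhd | Rhd

type_synonym srs = "(sym list \<times> sym list) set"

definition rstep :: "srs \<Rightarrow> (sym list \<times> sym list) set" where
  "rstep R = {(u @ l @ v, u @ r @ v) | u l r v. (l, r) \<in> R}"

definition topstep :: "srs \<Rightarrow> (sym list \<times> sym list) set" where
  "topstep R = {(l @ v, r @ v) | l r v. (l, r) \<in> R}"

definition rel_terminating :: "('a \<times> 'a) set \<Rightarrow> ('a \<times> 'a) set \<Rightarrow> bool" where
  "rel_terminating R1 R2 \<longleftrightarrow>
     \<not> (\<exists>(s :: nat \<Rightarrow> 'a) (I :: nat set). infinite I
          \<and> (\<forall>i\<in>I. (s i, s (Suc i)) \<in> R1)
          \<and> (\<forall>i. i \<notin> I \<longrightarrow> (s i, s (Suc i)) \<in> R2))"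

definition rev_srs :: "srs \<Rightarrow> srs" where
  "rev_srs R = {(rev l, rev r) | l r. (l, r) \<in> R}"

definition D_T :: srs where
  "D_T = {([Zero2, Rhd], [Rhd]), ([One2, Rhd], [Two3, Rhd])}"

definition A_rules :: srs where
  "A_rules = {([Zero2, Zero3], [Zero3, Zero2]),
              ([Zero2, One3], [Zero3, One2]),
              ([Zero2, Two3], [One3, Zero2]),
              ([One2, Zero3], [One3, One2]),
              ([One2, One3], [Two3, Zero2]),
              ([One2, Two3], [Two3, One2])}"

definition B_rules :: srs where
  "B_rules = {([Lhd, Zero3], [Lhd, One2]),
              ([Lhd, One3], [Lhd, Zero2, Zero2]),
              ([Lhd, Two3], [Lhd, Zero2, One2])}"

definition T_rules :: srs where
  "T_rules = D_T \<union> A_rules \<union> B_rules"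

end

theory Submission
  imports Defs "HOL-Library.Infinite_Set"
begin

fun hs :: "sym \<Rightarrow> nat \<Rightarrow> sym list \<Rightarrow> sym list" where
  "hs c m [] = []"
| "hs c m (x#xs) = (if m \<le> count_list xs c then hs c m xs else x#xs)"

definition sh0 :: "sym \<Rightarrow> sym list \<Rightarrow> sym list \<Rightarrow> bool" where
  "sh0 c l r = (count_list l c = 0 \<and> count_list r c = 0)"
definition sh1 :: "sym \<Rightarrow> sym list \<Rightarrow> sym list \<Rightarrow> bool" where
  "sh1 c l r = (\<exists>l0 r0. l = c#l0 \<and> r = c#r0 \<and> count_list l0 c = 0 \<and> count_list r0 c = 0)"

lemma L1: "m \<le> count_list w c \<Longrightarrow> hs c m (u@w) = hs c m w"
  by (induct u) auto

lemma L0: "count_list w c < m \<Longrightarrow> hs c m w = w"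
  by (cases w) (auto split: if_splits)

lemma L2: "count_list w c < m \<Longrightarrow> hs c m (u@w) = hs c (m - count_list w c) u @ w"
proof (induct u)
  case Nil then show ?case by (simp add: L0)
next
  case (Cons x u) then show ?case by auto
qed

lemma step_h:
  assumes "sh0 c l r \<or> sh1 c l r"
  shows "hs c m (u@l@v) = hs c m (u@r@v) \<or> (hs c m (u@l@v), hs c m (u@r@v)) \<in> rstep {(l,r)}"
proof -
  have cl: "count_list l c = count_list r c" using assms by (auto simp: sh0_def sh1_def)
  show ?thesis
  proof (cases "m \<le> count_list v c")
    case True
    then show ?thesis using L1[of m v c "u@l"] L1[of m v c "u@r"] by simp
  next
    case F: False
    show ?thesis
    proof (cases "m \<le> count_list (l@v) c")
      case True
      then have "sh1 c l r" using assms F by (auto simp: sh0_def)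
      then obtain l0 r0 where l: "l = c#l0" "r = c#r0" "count_list l0 c = 0" "count_list r0 c = 0"
        by (auto simp: sh1_def)
      have m: "m = Suc (count_list v c)" using True F l by simp
      have "hs c m (u@l@v) = l@v" using L1[of m "l@v" c u] True m l by simp
      moreover have "hs c m (u@r@v) = r@v" using L1[of m "r@v" c u] True m l by simp
      moreover have "(l@v, r@v) \<in> rstep {(l,r)}" unfolding rstep_def
        by (rule CollectI, rule exI[of _ "[]"]) auto
      ultimately show ?thesis by simp
    next
      case False
      have a: "hs c m (u@l@v) = hs c (m - count_list (l@v) c) u @ l @ v"
        using L2[of "l@v" c m u] False by simp
      have b: "hs c m (u@r@v) = hs c (m - count_list (l@v) c) u @ r @ v"
        using L2[of "r@v" c m u] False cl by simp
      show ?thesis unfolding a b rstep_def by blast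
    qed
  qed
qed

lemma rstep_mono: "A \<subseteq> B \<Longrightarrow> rstep A \<subseteq> rstep B"
  unfolding rstep_def by blast

lemma rstep_h:
  assumes "(s,s') \<in> rstep S" "\<forall>(l,r)\<in>S. sh0 c l r \<or> sh1 c l r"
  shows "count_list s c = count_list s' c \<and> (hs c m s = hs c m s' \<or> (hs c m s, hs c m s') \<in> rstep S)"
proof -
  obtain u l r v where e: "s = u@l@v" "s' = u@r@v" "(l,r) \<in> S"
    using assms(1) unfolding rstep_def by blast
  have sh: "sh0 c l r \<or> sh1 c l r" using assms(2) e(3) by auto
  have cl: "count_list l c = count_list r c" using sh by (auto simp: sh0_def sh1_def)
  have "rstep {(l,r)} \<subseteq> rstep S" using e(3) by (intro rstep_mono) auto
  then show ?thesis using step_h[OF sh, of m u v] e cl by auto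
qed

lemma rstep_top:
  assumes "(s,s') \<in> rstep R" "\<forall>(l,r)\<in>R. sh1 c l r"
  shows "\<exists>m. 1 \<le> m \<and> m \<le> count_list s c \<and> (hs c m s, hs c m s') \<in> topstep R"
proof -
  obtain u l r v where e: "s = u@l@v" "s' = u@r@v" "(l,r) \<in> R"
    using assms(1) unfolding rstep_def by blast
  obtain l0 r0 where l: "l = c#l0" "r = c#r0" "count_list l0 c = 0" "count_list r0 c = 0"
    using assms(2) e(3) by (auto simp: sh1_def)
  define m where "m = Suc (count_list v c)"
  have "hs c m (u@l@v) = l@v" using L1[of m "l@v" c u] m_def l by simp
  moreover have "hs c m (u@r@v) = r@v" using L1[of m "r@v" c u] m_def l by simp
  moreover have "(l@v, r@v) \<in> topstep R" unfolding topstep_def using e(3) by blast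
  moreover have "1 \<le> m \<and> m \<le> count_list s c" using e l m_def by simp
  ultimately show ?thesis using e by metis
qed

lemma main_abs:
  assumes S: "\<forall>(l,r)\<in>S. sh0 c l r \<or> sh1 c l r"
    and RS: "R \<subseteq> S" and R: "\<forall>(l,r)\<in>R. sh1 c l r"
    and top: "rel_terminating (topstep R) (rstep S)"
  shows "rel_terminating (rstep R) (rstep S)"
proof (rule ccontr)
  assume "\<not> rel_terminating (rstep R) (rstep S)"
  then obtain s I where I: "infinite I" and sI: "\<forall>i\<in>I. (s i, s (Suc i)) \<in> rstep R"
    and sN: "\<forall>i. i \<notin> I \<longrightarrow> (s i, s (Suc i)) \<in> rstep S"
    unfolding rel_terminating_def by blast
  have allS: "(s i, s (Suc i)) \<in> rstep S" for i
    using sI sN rstep_mono[OF RS] by blast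
  define N where "N = count_list (s 0) c"
  have cN: "count_list (s i) c = N" for i
  proof (induct i)
    case 0 then show ?case by (simp add: N_def)
  next
    case (Suc i) then show ?case using rstep_h[OF allS[of i] S] by simp
  qed
  define P where "P m i = (1 \<le> m \<and> m \<le> N \<and> (hs c m (s i), hs c m (s (Suc i))) \<in> topstep R)" for m i
  have "I \<subseteq> (\<Union>m\<in>{1..N}. {i\<in>I. P m i})"
  proof
    fix i assume "i \<in> I"
    then obtain m where "1 \<le> m \<and> m \<le> count_list (s i) c \<and> (hs c m (s i), hs c m (s (Suc i))) \<in> topstep R"
      using rstep_top[OF _ R] sI by blast
    then show "i \<in> (\<Union>m\<in>{1..N}. {i\<in>I. P m i})" using \<open>i \<in> I\<close> cN P_def by auto
  qed
  then obtain m where "m \<in> {1..N}" and Im: "infinite {i\<in>I. P m i}"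
    using I finite_subset by blast
  define Imm where "Imm = {i\<in>I. P m i}"
  define J where "J = {i. i \<in> Imm \<or> hs c m (s i) \<noteq> hs c m (s (Suc i))}"
  have J: "infinite J" using Im unfolding Imm_def J_def by (rule infinite_super[rotated]) auto
  define e where "e = enumerate J"
  define t where "t n = hs c m (s (e n))" for n
  have between: "k \<notin> J" if "e n < k" "k < e (Suc n)" for n k
  proof
    assume "k \<in> J"
    then have "e (Suc n) \<le> k" unfolding e_def enumerate_Suc''[OF J]
      using that(1) e_def by (intro Least_le) auto
    then show False using that by simp
  qed
  have const: "\<forall>k. Suc (e n) + k \<le> e (Suc n) \<longrightarrow> hs c m (s (Suc (e n))) = hs c m (s (Suc (e n) + k))" for n
  proof
    fix k show "Suc (e n) + k \<le> e (Suc n) \<longrightarrow> hs c m (s (Suc (e n))) = hs c m (s (Suc (e n) + k))"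
    proof (induct k)
      case 0 then show ?case by simp
    next
      case (Suc k)
      show ?case
      proof
        assume a: "Suc (e n) + Suc k \<le> e (Suc n)"
        then have "Suc (e n) + k \<notin> J" by (intro between[of n]) auto
        then show "hs c m (s (Suc (e n))) = hs c m (s (Suc (e n) + Suc k))"
          using Suc a unfolding J_def by auto
      qed
    qed
  qed
  have next_eq: "hs c m (s (Suc (e n))) = t (Suc n)" for n
  proof -
    have "e n < e (Suc n)" unfolding e_def using enumerate_step[OF J] .
    then have eq: "Suc (e n) + (e (Suc n) - Suc (e n)) = e (Suc n)" by simp
    have "hs c m (s (Suc (e n))) = hs c m (s (Suc (e n) + (e (Suc n) - Suc (e n))))"
      using spec[OF const[of n], of "e (Suc n) - Suc (e n)"] eq by (simp only: order_refl simp_thms)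
    then show ?thesis unfolding t_def eq .
  qed
  define I' where "I' = {n. e n \<in> Imm}"
  have "Imm \<subseteq> e ` I'"
  proof
    fix i assume "i \<in> Imm"
    then have "i \<in> J" unfolding J_def by auto
    then obtain n where "e n = i" using enumerate_Ex[OF J] e_def by blast
    then show "i \<in> e ` I'" using \<open>i \<in> Imm\<close> I'_def by auto
  qed
  then have I': "infinite I'" using Im Imm_def finite_surj by blast
  have "\<forall>n\<in>I'. (t n, t (Suc n)) \<in> topstep R"
    using next_eq unfolding I'_def Imm_def P_def t_def by auto
  moreover have "\<forall>n. n \<notin> I' \<longrightarrow> (t n, t (Suc n)) \<in> rstep S"
  proof (intro allI impI)
    fix n assume "n \<notin> I'"
    have "e n \<in> J" unfolding e_def using enumerate_in_set[OF J] .
    then have "hs c m (s (e n)) \<noteq> hs c m (s (Suc (e n)))"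
      using \<open>n \<notin> I'\<close> unfolding J_def I'_def by auto
    then show "(t n, t (Suc n)) \<in> rstep S"
      using rstep_h[OF allS[of "e n"] S, of m] next_eq[of n] unfolding t_def by auto
  qed
  ultimately show False using top I' unfolding rel_terminating_def by blast
qed

lemma rev_srs_simps:
  "rev_srs {} = {}"
  "rev_srs (insert (a,b) X) = insert (rev a, rev b) (rev_srs X)"
  "rev_srs (X \<union> Y) = rev_srs X \<union> rev_srs Y"
  unfolding rev_srs_def by auto

lemma rev_srs_mono: "X \<subseteq> Y \<Longrightarrow> rev_srs X \<subseteq> rev_srs Y"
  unfolding rev_srs_def by blast

theorem mainTheorem7:
  shows "(\<forall>R. R \<subseteq> B_rules \<longrightarrow>
            rel_terminating (topstep R) (rstep T_rules) \<longrightarrow>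
            rel_terminating (rstep R) (rstep T_rules))
       \<and> (\<forall>Q. Q \<subseteq> D_T \<longrightarrow>
            rel_terminating (topstep (rev_srs Q)) (rstep (rev_srs T_rules)) \<longrightarrow>
            rel_terminating (rstep (rev_srs Q)) (rstep (rev_srs T_rules)))"
proof (intro conjI allI impI)
  fix R assume RB: "R \<subseteq> B_rules" and top: "rel_terminating (topstep R) (rstep T_rules)"
  have S: "\<forall>(l,r)\<in>T_rules. sh0 Lhd l r \<or> sh1 Lhd l r"
    unfolding T_rules_def D_T_def A_rules_def B_rules_def sh0_def sh1_def by auto
  have B: "\<forall>(l,r)\<in>B_rules. sh1 Lhd l r"
    unfolding B_rules_def sh1_def by auto
  show "rel_terminating (rstep R) (rstep T_rules)"
    by (rule main_abs[OF S _ _ top]) (use RB B in \<open>auto simp: T_rules_def\<close>)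
next
  fix Q assume QD: "Q \<subseteq> D_T"
    and top: "rel_terminating (topstep (rev_srs Q)) (rstep (rev_srs T_rules))"
  have S: "\<forall>(l,r)\<in>rev_srs T_rules. sh0 Rhd l r \<or> sh1 Rhd l r"
    unfolding T_rules_def D_T_def A_rules_def B_rules_def rev_srs_simps sh0_def sh1_def by auto
  have D: "\<forall>(l,r)\<in>rev_srs D_T. sh1 Rhd l r"
    unfolding D_T_def rev_srs_simps sh1_def by auto
  have sub: "rev_srs Q \<subseteq> rev_srs D_T" using QD by (rule rev_srs_mono)
  have sub2: "rev_srs D_T \<subseteq> rev_srs T_rules" by (rule rev_srs_mono) (auto simp: T_rules_def)
  show "rel_terminating (rstep (rev_srs Q)) (rstep (rev_srs T_rules))"
    by (rule main_abs[OF S _ _ top]) (use sub sub2 D in auto)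
qed

end
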